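(* Fix $a'\in(-1,1)$. For $d\in(0,\sqrt{1-a'^2})$ let $r=\sqrt{a'^2+d^2}$, $H=-\frac1r-a'$ and $c=\frac{a'}{r}-\frac{d^2}{2}$ (the energy and constant $c$ of the planar Stark solution with $(x(0),y(0))=(a',d)$, $(\dot x(0),\dot y(0))=(0,0)$), and define $$T_\xi=4\int_0^{\xi_1}\frac{d\xi}{\sqrt{\xi^4+2H\xi^2+2(c+1)}},\quad \xi_1^2=-H-\sqrt{H^2-2(c+1)},$$ $$T_\eta=4\int_0^{\eta_1}\frac{d\eta}{\sqrt{-\eta^4+2H\eta^2-2(c-1)}},\quad \eta_1^2=H+\sqrt{H^2-2(c-1)}.$$ Then $T_\xi/T_\eta$ is a monotone function of $d\in(0,\sqrt{1-a'^2})$.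
   Context: $T_\xi$ and $T_\eta$ are the periods, in the regularized time $\tau$ (with $dt=(\xi^2+\eta^2)d\tau$), of the parabolic coordinates $\xi^2=r+x$, $\eta^2=r-x$ of that solution of the planar Stark problem $\ddot x=-x/r^3+1$, $\ddot y=-y/r^3$. *)

theory Defs
  imports "HOL-Analysis.Analysis"
begin

definition stark_r :: "real \<Rightarrow> real \<Rightarrow> real" where
  "stark_r a d = sqrt (a\<^sup>2 + d\<^sup>2)"

definition stark_H :: "real \<Rightarrow> real \<Rightarrow> real" where
  "stark_H a d = - 1 / stark_r a d - a"

definition stark_c :: "real \<Rightarrow> real \<Rightarrow> real" where
  "stark_c a d = a / stark_r a d - d\<^sup>2 / 2"

definition xi1 :: "real \<Rightarrow> real \<Rightarrow> real" where
  "xi1 a d = sqrt (- stark_H a d - sqrt ((stark_H a d)\<^sup>2 - 2 * (stark_c a d + 1)))"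

definition eta1 :: "real \<Rightarrow> real \<Rightarrow> real" where
  "eta1 a d = sqrt (stark_H a d + sqrt ((stark_H a d)\<^sup>2 - 2 * (stark_c a d - 1)))"

text \<open>Periods (Henstock-Kurzweil integrals; the integrands have integrable
  inverse-square-root singularities at the upper endpoint).\<close>

definition T_xi :: "real \<Rightarrow> real \<Rightarrow> real" where
  "T_xi a d = 4 * integral {0..xi1 a d}
     (\<lambda>\<xi>. 1 / sqrt (\<xi>^4 + 2 * stark_H a d * \<xi>\<^sup>2 + 2 * (stark_c a d + 1)))"

definition T_eta :: "real \<Rightarrow> real \<Rightarrow> real" where
  "T_eta a d = 4 * integral {0..eta1 a d}
     (\<lambda>\<eta>. 1 / sqrt (- (\<eta>^4) + 2 * stark_H a d * \<eta>\<^sup>2 - 2 * (stark_c a d - 1)))"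

end

theory Submission
  imports Defs
begin

definition wt :: "real \<Rightarrow> real" where "wt t = 1 / sqrt (1 - t\<^sup>2)"

lemma wt_has_integral: "(wt has_integral (pi/2)) {0..1}"
proof -
  have "(wt has_integral (arcsin 1 - arcsin 0)) {0..1}"
  proof (rule fundamental_theorem_of_calculus_interior)
    show "continuous_on {0..1} arcsin"
      by (rule continuous_on_subset[OF continuous_on_arcsin']) auto
    fix x :: real assume "x \<in> {0<..<1}"
    then have "DERIV arcsin x :> inverse (sqrt (1 - x\<^sup>2))" by (intro DERIV_arcsin) auto
    then show "(arcsin has_vector_derivative wt x) (at x)"
      by (simp add: wt_def has_real_derivative_iff_has_vector_derivative[symmetric] divide_inverse)
  qed simp
  then show ?thesis by simp
qed

lemma wt_nonneg: "t \<in> {0..1} \<Longrightarrow> 0 \<le> wt t"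
  by (auto simp: wt_def power_le_one)

lemma wt_abs: "wt absolutely_integrable_on {0..1}"
  using wt_has_integral wt_nonneg by (intro nonnegative_absolutely_integrable_1) auto

lemma prod_integrable:
  assumes "continuous_on {0..1} g"
  shows "(\<lambda>t. g t * wt t) integrable_on {0..1}"
proof -
  have "(\<lambda>t. g t * wt t) absolutely_integrable_on {0..1}"
  proof (rule absolutely_integrable_bounded_measurable_product_real)
    show "g \<in> borel_measurable (lebesgue_on {0..1})"
      by (rule continuous_imp_measurable_on_sets_lebesgue[OF assms]) auto
    show "bounded (g ` {0..1})"
      by (rule compact_imp_bounded, rule compact_continuous_image[OF assms]) auto
  qed (auto simp: wt_abs)
  then show ?thesis using absolutely_integrable_on_def by blast
qed

lemma scale_int:
  fixes f :: "real \<Rightarrow> real"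
  assumes "s > 0" "(f has_integral I) {0..1}"
  shows "((\<lambda>x. f (x/s) / s) has_integral I) {0..s}"
proof -
  have "((\<lambda>x. f ((1/s) * x)) has_integral (1 / \<bar>1/s\<bar>) *\<^sub>R I) ((\<lambda>x. x / (1/s)) ` {0..1})"
    by (rule has_integral_stretch_real[OF assms(2)]) (use assms in auto)
  moreover have "(\<lambda>x. x / (1/s)) ` {0..1} = {0..s}"
    using assms(1) by (auto simp: image_iff intro!: bexI[where x="_ / s"])
  ultimately have "((\<lambda>x. f (x/s)) has_integral s * I) {0..s}"
    using assms(1) by simp
  from has_integral_mult_left[OF this, of "1/s"] show ?thesis
    using assms(1) by simp
qed

definition Pf :: "real \<Rightarrow> real \<Rightarrow> real" where "Pf a r = r + a"
definition Qf :: "real \<Rightarrow> real \<Rightarrow> real" where "Qf a r = 2/r + a - r"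
definition Nf :: "real \<Rightarrow> real \<Rightarrow> real" where "Nf a r = 2/r + a + r"
definition Mf :: "real \<Rightarrow> real \<Rightarrow> real" where "Mf a r = r - a"
definition gA :: "real \<Rightarrow> real \<Rightarrow> real \<Rightarrow> real" where "gA a r t = 1 / sqrt (Qf a r - Pf a r * t\<^sup>2)"
definition gB :: "real \<Rightarrow> real \<Rightarrow> real \<Rightarrow> real" where "gB a r t = 1 / sqrt (Nf a r + Mf a r * t\<^sup>2)"
definition IA :: "real \<Rightarrow> real \<Rightarrow> real" where "IA a r = integral {0..1} (\<lambda>t. gA a r t * wt t)"
definition IB :: "real \<Rightarrow> real \<Rightarrow> real" where "IB a r = integral {0..1} (\<lambda>t. gB a r t * wt t)"

lemma r_facts:
  assumes "0 < d" "d < sqrt (1 - a\<^sup>2)"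
  shows "\<bar>a\<bar> < stark_r a d" "stark_r a d < 1" "(stark_r a d)\<^sup>2 = a\<^sup>2 + d\<^sup>2"
proof -
  have s0: "0 < sqrt (1 - a\<^sup>2)" using assms by linarith
  then have "0 < 1 - a\<^sup>2" by simp
  have "d\<^sup>2 < (sqrt (1 - a\<^sup>2))\<^sup>2" using assms by (intro power_strict_mono) auto
  then have d2: "d\<^sup>2 < 1 - a\<^sup>2" using \<open>0 < 1 - a\<^sup>2\<close> by simp
  show "(stark_r a d)\<^sup>2 = a\<^sup>2 + d\<^sup>2" unfolding stark_r_def by simp
  have "sqrt (a\<^sup>2) < sqrt (a\<^sup>2 + d\<^sup>2)" using assms(1) by (intro real_sqrt_less_mono) simp
  then show "\<bar>a\<bar> < stark_r a d" unfolding stark_r_def real_sqrt_abs .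
  show "stark_r a d < 1" unfolding stark_r_def using d2 by simp
qed

lemma cont_gA:
  assumes "\<bar>a\<bar> < r" "r < 1"
  shows "continuous_on {0..1} (gA a r)" and "\<And>t. t \<in> {0..1} \<Longrightarrow> Qf a r - Pf a r * t\<^sup>2 \<ge> Qf a r - Pf a r"
    and "Qf a r - Pf a r > 0" and "Pf a r > 0"
proof -
  have r0: "r > 0" using assms by linarith
  show P0: "Pf a r > 0" unfolding Pf_def using assms by linarith
  have "1 < 1 / r" using r0 assms by (simp add: field_simps)
  then show QP: "Qf a r - Pf a r > 0" unfolding Pf_def Qf_def using assms by linarith
  show *: "\<And>t. t \<in> {0..1} \<Longrightarrow> Qf a r - Pf a r * t\<^sup>2 \<ge> Qf a r - Pf a r"
  proof -
    fix t :: real assume "t \<in> {0..1}"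
    then have "t\<^sup>2 \<le> 1" by (auto simp: power_le_one)
    then show "Qf a r - Pf a r * t\<^sup>2 \<ge> Qf a r - Pf a r" using P0
      by (simp add: mult_left_le)
  qed
  show "continuous_on {0..1} (gA a r)" unfolding gA_def
    by (intro continuous_intros) (use * QP in force)
qed

lemma cont_gB:
  assumes "\<bar>a\<bar> < r" "r < 1"
  shows "continuous_on {0..1} (gB a r)" and "\<And>t. t \<in> {0..1} \<Longrightarrow> Nf a r + Mf a r * t\<^sup>2 \<ge> Nf a r"
    and "Nf a r > 0" and "Mf a r > 0"
proof -
  have r0: "r > 0" using assms by linarith
  show M0: "Mf a r > 0" unfolding Mf_def using assms by linarith
  have "1 < 1 / r" using r0 assms by (simp add: field_simps)
  then show N0: "Nf a r > 0" unfolding Nf_def using assms by linarith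
  show *: "\<And>t. t \<in> {0..1} \<Longrightarrow> Nf a r + Mf a r * t\<^sup>2 \<ge> Nf a r"
    using M0 by simp
  show "continuous_on {0..1} (gB a r)" unfolding gB_def
    by (intro continuous_intros) (use * N0 in force)
qed

lemma xi1_eq:
  assumes "0 < d" "d < sqrt (1 - a\<^sup>2)"
  shows "xi1 a d = sqrt (Pf a (stark_r a d))"
proof -
  define r where "r = stark_r a d"
  have r: "\<bar>a\<bar> < r" "r < 1" "r\<^sup>2 = a\<^sup>2 + d\<^sup>2" using r_facts[OF assms] by (auto simp: r_def)
  have r0: "r > 0" using r by linarith
  have "1 < 1 / r" using r0 r by (simp add: field_simps)
  then have pos: "1/r - r > 0" using r by linarith
  have c: "stark_c a d = a/r - (r\<^sup>2 - a\<^sup>2)/2" unfolding stark_c_def r_def[symmetric] using r(3) by simp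
  have H: "stark_H a d = -1/r - a" unfolding stark_H_def r_def[symmetric] by simp
  have "(stark_H a d)\<^sup>2 - 2 * (stark_c a d + 1) = (1/r - r)\<^sup>2"
    unfolding c H using r0 by (simp add: field_simps power2_eq_square)
  then have "sqrt ((stark_H a d)\<^sup>2 - 2 * (stark_c a d + 1)) = 1/r - r" using pos by simp
  then show ?thesis unfolding xi1_def Pf_def r_def[symmetric] stark_H_def by (simp add: algebra_simps)
qed

lemma eta1_eq:
  assumes "0 < d" "d < sqrt (1 - a\<^sup>2)"
  shows "eta1 a d = sqrt (Mf a (stark_r a d))"
proof -
  define r where "r = stark_r a d"
  have r: "\<bar>a\<bar> < r" "r < 1" "r\<^sup>2 = a\<^sup>2 + d\<^sup>2" using r_facts[OF assms] by (auto simp: r_def)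
  have r0: "r > 0" using r by linarith
  have pos: "1/r + r > 0" using r0 by (simp add: add_pos_pos)
  have c: "stark_c a d = a/r - (r\<^sup>2 - a\<^sup>2)/2" unfolding stark_c_def r_def[symmetric] using r(3) by simp
  have H: "stark_H a d = -1/r - a" unfolding stark_H_def r_def[symmetric] by simp
  have "(stark_H a d)\<^sup>2 - 2 * (stark_c a d - 1) = (1/r + r)\<^sup>2"
    unfolding c H using r0 by (simp add: field_simps power2_eq_square)
  then have "sqrt ((stark_H a d)\<^sup>2 - 2 * (stark_c a d - 1)) = 1/r + r" using pos by simp
  then show ?thesis unfolding eta1_def Mf_def r_def[symmetric] stark_H_def by (simp add: algebra_simps)
qed

lemma T_xi_eq:
  assumes "0 < d" "d < sqrt (1 - a\<^sup>2)"
  shows "T_xi a d = 4 * IA a (stark_r a d)"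
proof -
  define r where "r = stark_r a d"
  have r: "\<bar>a\<bar> < r" "r < 1" "r\<^sup>2 = a\<^sup>2 + d\<^sup>2" using r_facts[OF assms] by (auto simp: r_def)
  have r0: "r > 0" using r by linarith
  have c: "stark_c a d = a/r - (r\<^sup>2 - a\<^sup>2)/2" unfolding stark_c_def r_def[symmetric] using r(3) by simp
  have H: "stark_H a d = -1/r - a" unfolding stark_H_def r_def[symmetric] by simp
  define P where "P = Pf a r"
  define Q where "Q = Qf a r"
  have P0: "P > 0" and QP: "Q - P > 0" using cont_gA[OF r(1,2)] by (auto simp: P_def Q_def)
  define s where "s = sqrt P"
  have s0: "s > 0" and ss: "s * s = P" using P0 by (auto simp: s_def)
  define f where "f = (\<lambda>t. gA a r t * wt t)"
  have "f integrable_on {0..1}" unfolding f_def by (rule prod_integrable[OF cont_gA(1)[OF r(1,2)]])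
  then have "(f has_integral IA a r) {0..1}" by (simp add: IA_def f_def integrable_integral)
  from scale_int[OF s0 this] have I: "((\<lambda>x. f (x/s) / s) has_integral IA a r) {0..s}" .
  have eq: "f (x/s) / s = 1 / sqrt (x^4 + 2 * stark_H a d * x\<^sup>2 + 2 * (stark_c a d + 1))"
    if x: "x \<in> {0..s}" for x
  proof -
    have "x\<^sup>2 \<le> s\<^sup>2" using x by (intro power_mono) auto
    then have xP: "x\<^sup>2 \<le> P" using ss by (simp add: power2_eq_square)
    have xs: "(x/s)\<^sup>2 = x\<^sup>2 / P" using ss by (simp add: power_divide power2_eq_square)
    have "f (x/s) / s = 1 / (sqrt (Q - x\<^sup>2) * sqrt (1 - x\<^sup>2 / P) * sqrt P)"
      unfolding f_def gA_def wt_def xs using P0 by (simp add: Q_def[symmetric] P_def[symmetric] s_def)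
    also have "\<dots> = 1 / sqrt ((Q - x\<^sup>2) * ((1 - x\<^sup>2 / P) * P))"
      by (simp add: real_sqrt_mult mult.assoc)
    also have "(1 - x\<^sup>2 / P) * P = P - x\<^sup>2" using P0 by (simp add: field_simps)
    also have "(Q - x\<^sup>2) * (P - x\<^sup>2) = x^4 + 2 * stark_H a d * x\<^sup>2 + 2 * (stark_c a d + 1)"
      unfolding c H Q_def P_def Qf_def Pf_def using r0
      by (simp add: field_simps power2_eq_square power4_eq_xxxx)
    finally show ?thesis .
  qed
  have "((\<lambda>x. 1 / sqrt (x^4 + 2 * stark_H a d * x\<^sup>2 + 2 * (stark_c a d + 1))) has_integral IA a r) {0..s}"
    using I by (rule has_integral_eq[rotated]) (use eq in auto)
  moreover have "xi1 a d = s" using xi1_eq[OF assms] by (simp add: s_def P_def r_def)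
  ultimately show ?thesis unfolding T_xi_def r_def[symmetric] by (simp add: integral_unique)
qed

lemma T_eta_eq:
  assumes "0 < d" "d < sqrt (1 - a\<^sup>2)"
  shows "T_eta a d = 4 * IB a (stark_r a d)"
proof -
  define r where "r = stark_r a d"
  have r: "\<bar>a\<bar> < r" "r < 1" "r\<^sup>2 = a\<^sup>2 + d\<^sup>2" using r_facts[OF assms] by (auto simp: r_def)
  have r0: "r > 0" using r by linarith
  have c: "stark_c a d = a/r - (r\<^sup>2 - a\<^sup>2)/2" unfolding stark_c_def r_def[symmetric] using r(3) by simp
  have H: "stark_H a d = -1/r - a" unfolding stark_H_def r_def[symmetric] by simp
  define P where "P = Mf a r"
  define Q where "Q = Nf a r"
  have P0: "P > 0" using cont_gB[OF r(1,2)] by (auto simp: P_def Q_def)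
  define s where "s = sqrt P"
  have s0: "s > 0" and ss: "s * s = P" using P0 by (auto simp: s_def)
  define f where "f = (\<lambda>t. gB a r t * wt t)"
  have "f integrable_on {0..1}" unfolding f_def by (rule prod_integrable[OF cont_gB(1)[OF r(1,2)]])
  then have "(f has_integral IB a r) {0..1}" by (simp add: IB_def f_def integrable_integral)
  from scale_int[OF s0 this] have I: "((\<lambda>x. f (x/s) / s) has_integral IB a r) {0..s}" .
  have eq: "f (x/s) / s = 1 / sqrt (- (x^4) + 2 * stark_H a d * x\<^sup>2 - 2 * (stark_c a d - 1))"
    if x: "x \<in> {0..s}" for x
  proof -
    have xs: "(x/s)\<^sup>2 = x\<^sup>2 / P" using ss by (simp add: power_divide power2_eq_square)
    have "f (x/s) / s = 1 / (sqrt (Q + x\<^sup>2) * sqrt (1 - x\<^sup>2 / P) * sqrt P)"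
      unfolding f_def gB_def wt_def xs using P0 by (simp add: Q_def[symmetric] P_def[symmetric] s_def)
    also have "\<dots> = 1 / sqrt ((Q + x\<^sup>2) * ((1 - x\<^sup>2 / P) * P))"
      by (simp add: real_sqrt_mult mult.assoc)
    also have "(1 - x\<^sup>2 / P) * P = P - x\<^sup>2" using P0 by (simp add: field_simps)
    also have "(Q + x\<^sup>2) * (P - x\<^sup>2) = - (x^4) + 2 * stark_H a d * x\<^sup>2 - 2 * (stark_c a d - 1)"
      unfolding c H Q_def P_def Nf_def Mf_def using r0
      by (simp add: field_simps power2_eq_square power4_eq_xxxx)
    finally show ?thesis .
  qed
  have "((\<lambda>x. 1 / sqrt (- (x^4) + 2 * stark_H a d * x\<^sup>2 - 2 * (stark_c a d - 1))) has_integral IB a r) {0..s}"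
    using I by (rule has_integral_eq[rotated]) (use eq in auto)
  moreover have "eta1 a d = s" using eta1_eq[OF assms] by (simp add: s_def P_def r_def)
  ultimately show ?thesis unfolding T_eta_def r_def[symmetric] by (simp add: integral_unique)
qed

lemma int_lower:
  assumes "continuous_on {0..1} g" "\<And>t. t \<in> {0..1} \<Longrightarrow> k \<le> g t" "k > 0"
  shows "integral {0..1} (\<lambda>t. g t * wt t) > 0"
proof -
  have "integral {0..1} (\<lambda>t. k * wt t) \<le> integral {0..1} (\<lambda>t. g t * wt t)"
    by (rule integral_le)
      (auto intro!: prod_integrable assms(1) continuous_intros mult_right_mono assms(2) wt_nonneg)
  moreover have "integral {0..1} (\<lambda>t. k * wt t) = k * (pi/2)"
    using integral_unique[OF wt_has_integral] by simp
  moreover have "k * (pi/2) > 0" using assms(3) by simp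
  ultimately show ?thesis by linarith
qed

lemma int_cmp:
  assumes "continuous_on {0..1} g1" "continuous_on {0..1} g2" "\<And>t. t \<in> {0..1} \<Longrightarrow> c * g1 t \<le> g2 t"
  shows "c * integral {0..1} (\<lambda>t. g1 t * wt t) \<le> integral {0..1} (\<lambda>t. g2 t * wt t)"
proof -
  have "integral {0..1} (\<lambda>t. c * (g1 t * wt t)) \<le> integral {0..1} (\<lambda>t. g2 t * wt t)"
    by (rule integral_le)
      (auto intro!: integrable_on_cmult_left prod_integrable assms(1,2) continuous_intros mult_right_mono assms(3) wt_nonneg
        simp: mult.assoc[symmetric])
  then show ?thesis by simp
qed

lemma IA_pos:
  assumes "\<bar>a\<bar> < r" "r < 1" shows "IA a r > 0"
proof -
  note cg = cont_gA[OF assms]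
  have "1 / sqrt (Qf a r) \<le> gA a r t" if "t \<in> {0..1}" for t
  proof -
    have "Qf a r - Pf a r * t\<^sup>2 \<le> Qf a r" using cg(4) by simp
    moreover have "0 < Qf a r - Pf a r * t\<^sup>2" using cg(2)[OF that] cg(3) by linarith
    ultimately show ?thesis unfolding gA_def by (intro divide_left_mono) auto
  qed
  moreover have "Qf a r > 0" using cg(3,4) by linarith
  ultimately show ?thesis unfolding IA_def by (intro int_lower[OF cg(1), of "1 / sqrt (Qf a r)"]) auto
qed

lemma IB_pos:
  assumes "\<bar>a\<bar> < r" "r < 1" shows "IB a r > 0"
proof -
  note cg = cont_gB[OF assms]
  have "1 / sqrt (Nf a r + Mf a r) \<le> gB a r t" if "t \<in> {0..1}" for t
  proof -
    have "t\<^sup>2 \<le> 1" using that by (auto simp: power_le_one)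
    then have "Nf a r + Mf a r * t\<^sup>2 \<le> Nf a r + Mf a r" using cg(4) by (simp add: mult_left_le)
    moreover have "0 < Nf a r + Mf a r * t\<^sup>2" using cg(2)[OF that] cg(3) by linarith
    ultimately show ?thesis unfolding gB_def by (intro divide_left_mono) auto
  qed
  moreover have "Nf a r + Mf a r > 0" using cg(3,4) by linarith
  ultimately show ?thesis unfolding IB_def by (intro int_lower[OF cg(1), of "1 / sqrt (Nf a r + Mf a r)"]) auto
qed

lemma key_ineqs:
  assumes "\<bar>a\<bar> < x" "x \<le> y" "y < 1"
  shows "Nf a x * Qf a y \<le> Qf a x * Nf a y"
    and "Nf a x * (Qf a y - Pf a y) \<le> (Qf a x - Pf a x) * Nf a y"
    and "(Nf a x + Mf a x) * Qf a y \<le> Qf a x * (Nf a y + Mf a y)"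
    and "(Nf a x + Mf a x) * (Qf a y - Pf a y) \<le> (Qf a x - Pf a x) * (Nf a y + Mf a y)"
proof -
  have x0: "x > 0" and y0: "y > 0" using assms by linarith+
  have a1: "-x < a" "a < x" using assms by linarith+
  have x1: "2 / x > 2" and y1: "2/y > 2" using x0 y0 assms by (simp_all add: field_simps)
  have yx: "y - x \<ge> 0" using assms by simp
  have e1: "Qf a x * Nf a y - Nf a x * Qf a y = 2 * (y - x) * (2/x + 2/y + a)"
    unfolding Qf_def Nf_def using x0 y0 by (simp add: field_simps; simp add: algebra_simps)
  have "2/x + 2/y + a \<ge> 0" using x1 y1 assms a1 by linarith
  then have "0 \<le> 2 * (y - x) * (2/x + 2/y + a)" using yx by simp
  then show "Nf a x * Qf a y \<le> Qf a x * Nf a y" using e1 by linarith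
  have e2: "(Qf a x - Pf a x) * Nf a y - Nf a x * (Qf a y - Pf a y) = 2 / (x*y) * ((y - x) * (a*(1+x*y) + 3*(x+y)))"
    unfolding Qf_def Nf_def Pf_def using x0 y0 by (simp add: field_simps; simp add: algebra_simps)
  have "x * y \<le> 1" using x0 y0 assms by (simp add: mult_le_one)
  have "a*(1+x*y) \<ge> (-x)*(1+x*y)" using a1 x0 y0 by (intro mult_right_mono) auto
  then have "a*(1+x*y) \<ge> -(x*(1+x*y))" by simp
  moreover have "x*(1+x*y) \<le> 2*x" using \<open>x*y \<le> 1\<close> x0 by simp
  moreover have gen: "0 \<le> A + 3*(x+y)" if "-B \<le> A" "B \<le> 2*x" for A B using that x0 y0 by smt
  ultimately have "a*(1+x*y) + 3*(x+y) \<ge> 0" by blast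
  then have "0 \<le> 2 / (x*y) * ((y - x) * (a*(1+x*y) + 3*(x+y)))" using yx x0 y0 by simp
  then show "Nf a x * (Qf a y - Pf a y) \<le> (Qf a x - Pf a x) * Nf a y"
    using e2 by linarith
  have e3: "Qf a x * (Nf a y + Mf a y) - (Nf a x + Mf a x) * Qf a y = 2 / (x*y) * ((y - x) * (3*(x+y) - a*(1-x*y)))"
    unfolding Qf_def Nf_def Mf_def using x0 y0 by (simp add: field_simps; simp add: algebra_simps)
  have "0 \<le> 1 - x*y" using \<open>x*y \<le> 1\<close> by simp
  have "a*(1-x*y) \<le> x*(1-x*y)" using a1 \<open>0 \<le> 1 - x*y\<close> by (intro mult_right_mono) auto
  moreover have "x*(1-x*y) \<le> x" using x0 y0 by simp
  moreover have gen2: "0 \<le> 3*(x+y) - A" if "A \<le> B" "B \<le> x" for A B using that x0 y0 by smt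
  ultimately have "3*(x+y) - a*(1-x*y) \<ge> 0" by blast
  then have "0 \<le> 2 / (x*y) * ((y - x) * (3*(x+y) - a*(1-x*y)))" using yx x0 y0 by simp
  then show "(Nf a x + Mf a x) * Qf a y \<le> Qf a x * (Nf a y + Mf a y)"
    using e3 by linarith
  have e4: "(Qf a x - Pf a x) * (Nf a y + Mf a y) - (Nf a x + Mf a x) * (Qf a y - Pf a y) = 8 / (x*y) * ((y - x) * (y + x))"
    unfolding Qf_def Nf_def Mf_def Pf_def using x0 y0 by (simp add: field_simps; simp add: algebra_simps)
  moreover have "0 \<le> 8 / (x*y) * ((y - x) * (y + x))" using yx x0 y0 by simp
  ultimately show "(Nf a x + Mf a x) * (Qf a y - Pf a y) \<le> (Qf a x - Pf a x) * (Nf a y + Mf a y)"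
    by linarith
qed

lemma int_cmp2:
  assumes "continuous_on {0..1} g1" "continuous_on {0..1} g2" "\<And>t. t \<in> {0..1} \<Longrightarrow> g2 t \<le> c * g1 t"
  shows "integral {0..1} (\<lambda>t. g2 t * wt t) \<le> c * integral {0..1} (\<lambda>t. g1 t * wt t)"
proof -
  have "integral {0..1} (\<lambda>t. g2 t * wt t) \<le> integral {0..1} (\<lambda>t. c * (g1 t * wt t))"
    by (rule integral_le)
      (auto intro!: integrable_on_cmult_left prod_integrable assms(1,2) continuous_intros mult_right_mono assms(3) wt_nonneg
        simp: mult.assoc[symmetric])
  then show ?thesis by simp
qed

lemma sqrt_frac_le:
  assumes "0 < X1" "0 < X2" "0 \<le> C" "C * X2 \<le> X1"
  shows "sqrt C * (1 / sqrt X1) \<le> 1 / sqrt X2"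
proof -
  have "sqrt C * sqrt X2 \<le> sqrt X1" using assms by (simp add: real_sqrt_mult[symmetric])
  then show ?thesis using assms by (simp add: field_simps)
qed

lemma sqrt_frac_le2:
  assumes "0 < Y1" "0 < Y2" "0 \<le> C" "Y1 \<le> C * Y2"
  shows "1 / sqrt Y2 \<le> sqrt C * (1 / sqrt Y1)"
proof -
  have "sqrt Y1 \<le> sqrt C * sqrt Y2" using assms by (simp add: real_sqrt_mult[symmetric])
  then show ?thesis using assms by (simp add: field_simps)
qed

lemma div_helper:
  fixes Nn D Q1 Q2 :: real
  assumes "D > 0" "Nn * Q2 \<le> Q1 * D"
  shows "(Nn / D) * Q2 \<le> Q1"
proof -
  have "(Nn / D) * Q2 = (Nn * Q2) / D" by simp
  also have "\<dots> \<le> Q1" using assms by (simp add: pos_divide_le_eq)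
  finally show ?thesis .
qed

lemma ratio_mono:
  assumes "\<bar>a\<bar> < x" "x \<le> y" "y < 1"
  shows "IA a x / IB a x \<le> IA a y / IB a y"
proof -
  have ax: "\<bar>a\<bar> < x" "x < 1" and ay: "\<bar>a\<bar> < y" "y < 1" using assms by linarith+
  note Ax = cont_gA[OF ax] and Ay = cont_gA[OF ay] and Bx = cont_gB[OF ax] and By = cont_gB[OF ay]
  note K = key_ineqs[OF assms]
  define C where "C = max (Nf a x / Nf a y) ((Nf a x + Mf a x) / (Nf a y + Mf a y))"
  have NMy: "Nf a y + Mf a y > 0" using By by linarith
  have C0: "C > 0" unfolding C_def using Bx By NMy by (simp add: less_max_iff_disj)
  have hN0: "Nf a x \<le> C * Nf a y"
  proof -
    have "Nf a x = (Nf a x / Nf a y) * Nf a y" using By(3) by simp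
    also have "\<dots> \<le> C * Nf a y" using By(3) by (intro mult_right_mono) (auto simp: C_def)
    finally show ?thesis .
  qed
  have hN1: "Nf a x + Mf a x \<le> C * (Nf a y + Mf a y)"
  proof -
    have "Nf a x + Mf a x = ((Nf a x + Mf a x) / (Nf a y + Mf a y)) * (Nf a y + Mf a y)" using NMy by simp
    also have "\<dots> \<le> C * (Nf a y + Mf a y)" using NMy by (intro mult_right_mono) (auto simp: C_def)
    finally show ?thesis .
  qed
  have hQ: "C * Qf a y \<le> Qf a x \<and> C * (Qf a y - Pf a y) \<le> Qf a x - Pf a x"
  proof (cases "Nf a x / Nf a y \<le> (Nf a x + Mf a x) / (Nf a y + Mf a y)")
    case True
    then have "C = (Nf a x + Mf a x) / (Nf a y + Mf a y)" by (simp add: C_def)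
    then show ?thesis using div_helper[OF NMy K(3)] div_helper[OF NMy K(4)] by simp
  next
    case False
    then have "C = Nf a x / Nf a y" by (simp add: C_def)
    then show ?thesis using div_helper[OF By(3) K(1)] div_helper[OF By(3) K(2)] by simp
  qed
  have ptA: "sqrt C * gA a x t \<le> gA a y t" if t: "t \<in> {0..1}" for t
  proof -
    have s: "0 \<le> t\<^sup>2" "t\<^sup>2 \<le> 1" using t by (auto simp: power_le_one)
    have X1: "0 < Qf a x - Pf a x * t\<^sup>2" using Ax(2)[OF t] Ax(3) by linarith
    have X2: "0 < Qf a y - Pf a y * t\<^sup>2" using Ay(2)[OF t] Ay(3) by linarith
    have "Qf a x - Pf a x * t\<^sup>2 - C * (Qf a y - Pf a y * t\<^sup>2)
        = (1 - t\<^sup>2) * (Qf a x - C * Qf a y) + t\<^sup>2 * ((Qf a x - Pf a x) - C * (Qf a y - Pf a y))"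
      by (simp add: algebra_simps)
    also have "\<dots> \<ge> 0" using s hQ by (intro add_nonneg_nonneg mult_nonneg_nonneg) auto
    finally have "C * (Qf a y - Pf a y * t\<^sup>2) \<le> Qf a x - Pf a x * t\<^sup>2" by simp
    then show ?thesis unfolding gA_def using X1 X2 C0 by (intro sqrt_frac_le) auto
  qed
  have ptB: "gB a y t \<le> sqrt C * gB a x t" if t: "t \<in> {0..1}" for t
  proof -
    have s: "0 \<le> t\<^sup>2" "t\<^sup>2 \<le> 1" using t by (auto simp: power_le_one)
    have Y1: "0 < Nf a x + Mf a x * t\<^sup>2" using Bx(2)[OF t] Bx(3) by linarith
    have Y2: "0 < Nf a y + Mf a y * t\<^sup>2" using By(2)[OF t] By(3) by linarith
    have "C * (Nf a y + Mf a y * t\<^sup>2) - (Nf a x + Mf a x * t\<^sup>2)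
        = (1 - t\<^sup>2) * (C * Nf a y - Nf a x) + t\<^sup>2 * (C * (Nf a y + Mf a y) - (Nf a x + Mf a x))"
      by (simp add: algebra_simps)
    also have "\<dots> \<ge> 0" using s hN0 hN1 by (intro add_nonneg_nonneg mult_nonneg_nonneg) auto
    finally have "Nf a x + Mf a x * t\<^sup>2 \<le> C * (Nf a y + Mf a y * t\<^sup>2)" by simp
    then show ?thesis unfolding gB_def using Y1 Y2 C0 by (intro sqrt_frac_le2) auto
  qed
  have IA1: "sqrt C * IA a x \<le> IA a y"
    unfolding IA_def by (rule int_cmp[OF Ax(1) Ay(1) ptA])
  have IB1: "IB a y \<le> sqrt C * IB a x"
    unfolding IB_def by (rule int_cmp2[OF Bx(1) By(1) ptB])
  have pos: "IA a x > 0" "IB a x > 0" "IB a y > 0" "IA a y > 0"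
    using IA_pos[OF ax] IB_pos[OF ax] IB_pos[OF ay] IA_pos[OF ay] by auto
  have c0: "sqrt C > 0" using C0 by simp
  have "IA a x / IB a x = (sqrt C * IA a x) / (sqrt C * IB a x)" using c0 by simp
  also have "\<dots> \<le> IA a y / IB a y"
    by (rule frac_le) (use IA1 IB1 pos c0 in \<open>auto simp: less_imp_le\<close>)
  finally show ?thesis .
qed

theorem proposition3p3:
  fixes a :: real
  assumes "-1 < a" and "a < 1"
  shows "mono_on {0<..<sqrt (1 - a\<^sup>2)} (\<lambda>d. T_xi a d / T_eta a d)
       \<or> antimono_on {0<..<sqrt (1 - a\<^sup>2)} (\<lambda>d. T_xi a d / T_eta a d)"
proof (rule disjI1, rule mono_onI)
  fix d1 d2 assume d1: "d1 \<in> {0<..<sqrt (1 - a\<^sup>2)}" and d2: "d2 \<in> {0<..<sqrt (1 - a\<^sup>2)}"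
    and le: "d1 \<le> d2"
  have f1: "0 < d1" "d1 < sqrt (1 - a\<^sup>2)" and f2: "0 < d2" "d2 < sqrt (1 - a\<^sup>2)" using d1 d2 by auto
  note r1 = r_facts[OF f1] and r2 = r_facts[OF f2]
  have "d1\<^sup>2 \<le> d2\<^sup>2" using f1 le by (intro power_mono) auto
  then have rle: "stark_r a d1 \<le> stark_r a d2" unfolding stark_r_def by simp
  have "T_xi a d1 / T_eta a d1 = IA a (stark_r a d1) / IB a (stark_r a d1)"
    using T_xi_eq[OF f1] T_eta_eq[OF f1] by simp
  also have "\<dots> \<le> IA a (stark_r a d2) / IB a (stark_r a d2)"
    by (rule ratio_mono[OF r1(1) rle r2(2)])
  also have "\<dots> = T_xi a d2 / T_eta a d2"
    using T_xi_eq[OF f2] T_eta_eq[OF f2] by simp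
  finally show "T_xi a d1 / T_eta a d1 \<le> T_xi a d2 / T_eta a d2" .
qed

end
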